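(* Let $C$ be a small 2-category in which every 2-cell is invertible, let $n\ge 2$ and $1\le k\le n-1$. Then the square with maps $N^{k-1}_nC\to N^k_nC$ (restriction), $N^{k-1}_nC\to C_2$ ($u\mapsto u_{n,k,k-1}$), $\phi^k_n\colon N^k_nC\to C_1$, $\phi^k_n(u)=u_{n,k}\circ u_{k,k-1}$, and the target map $t\colon C_2\to C_1$ is a set-theoretic pullback; that is, the induced map $N^{k-1}_nC\to N^k_nC\times_{C_1}C_2$ is a bijection.
   Context: The nerve $NC$ of a 2-category $C$ is the simplicial set whose $n$-simplices are normal lax functors $[n]\dashrightarrow C$ (where $[n]=\{0<\dots<n\}$ is viewed as a 2-category with only identity 2-cells), with simplicial operators given by precomposition. Concretely an $n$-simplex $u$ is given by objects $u_i$, arrows $u_{j,i}\colon u_i\to u_j$ for $i<j$ (with $u_{i,i}=\mathrm{id}$), and 2-cells $u_{l,j,i}\colon u_{l,i}\Rightarrow u_{l,j}\circ u_{j,i}$ for $i<j<l$ (identities when two indices coincide), such that for each $i<j<k<l$: $(u_{l,k}\circ u_{k,j,i})\bullet u_{l,k,i}=(u_{l,k,j}\circ u_{j,i})\bullet u_{l,j,i}$. Simplices of $\Delta^n$ are order-preserving maps $a\colon[m]\to[n]$. For $0\le k\le n-1$ let $F_k\Delta^n\subset\Delta^n$ be the simplicial subset of those $a\colon[m]\to[n]$ with $a(m)<n$ or $a(0)\ge k$ (so $F_0\Delta^n=\Delta^n$; it is the union of the face $d_n\Delta^n\cong\Delta^{n-1}$ with the face spanned by vertices $k,\dots,n$), and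 let $N^k_nC$ be the set of simplicial maps $F_k\Delta^n\to NC$; thus $N^0_nC=NC_n$ and restriction gives maps $N^{k-1}_nC\to N^k_nC$. For $u\in N^k_nC$ we use the notation $u_i,u_{j,i},u_{l,j,i}$ for the images of the vertices, edges and triangles contained in $F_k\Delta^n$. $C_1$, $C_2$ denote the sets of arrows and 2-cells, and $t$ the target of 2-cells. *)

theory Defs
  imports Main
begin

text \<open>A small 2-category: objects C_0, arrows C_1, 2-cells C_2 (as sets), with
  domain/codomain of arrows, source/target of 2-cells (a 2-cell alpha goes
  from src alpha to tgt alpha), identities, composition of arrows
  (comp g f = g o f), vertical composition (vcomp b a = b \<bullet> a) and
  horizontal composition (hcomp b a = b o a).\<close>

record ('o, 'a, 'c) twocat =
  Ob   :: "'o set"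
  Ar   :: "'a set"
  Ce   :: "'c set"
  dom1 :: "'a \<Rightarrow> 'o"
  cod1 :: "'a \<Rightarrow> 'o"
  id1  :: "'o \<Rightarrow> 'a"
  comp :: "'a \<Rightarrow> 'a \<Rightarrow> 'a"
  src  :: "'c \<Rightarrow> 'a"
  tgt  :: "'c \<Rightarrow> 'a"
  id2  :: "'a \<Rightarrow> 'c"
  vcomp :: "'c \<Rightarrow> 'c \<Rightarrow> 'c"
  hcomp :: "'c \<Rightarrow> 'c \<Rightarrow> 'c"

definition two_category :: "('o, 'a, 'c, 'z) twocat_scheme \<Rightarrow> bool" where
  "two_category C \<longleftrightarrow>
    \<comment> \<open>underlying category of objects and arrows\<close>
    (\<forall>f\<in>Ar C. dom1 C f \<in> Ob C \<and> cod1 C f \<in> Ob C) \<and>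
    (\<forall>x\<in>Ob C. id1 C x \<in> Ar C \<and> dom1 C (id1 C x) = x \<and> cod1 C (id1 C x) = x) \<and>
    (\<forall>f\<in>Ar C. \<forall>g\<in>Ar C. dom1 C g = cod1 C f \<longrightarrow>
        comp C g f \<in> Ar C \<and> dom1 C (comp C g f) = dom1 C f \<and> cod1 C (comp C g f) = cod1 C g) \<and>
    (\<forall>f\<in>Ar C. comp C (id1 C (cod1 C f)) f = f \<and> comp C f (id1 C (dom1 C f)) = f) \<and>
    (\<forall>f\<in>Ar C. \<forall>g\<in>Ar C. \<forall>h\<in>Ar C. dom1 C g = cod1 C f \<and> dom1 C h = cod1 C g \<longrightarrow>
        comp C h (comp C g f) = comp C (comp C h g) f) \<and>
    \<comment> \<open>2-cells go between parallel arrows\<close>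
    (\<forall>a\<in>Ce C. src C a \<in> Ar C \<and> tgt C a \<in> Ar C \<and>
        dom1 C (src C a) = dom1 C (tgt C a) \<and> cod1 C (src C a) = cod1 C (tgt C a)) \<and>
    \<comment> \<open>vertical composition: a category structure on each hom\<close>
    (\<forall>f\<in>Ar C. id2 C f \<in> Ce C \<and> src C (id2 C f) = f \<and> tgt C (id2 C f) = f) \<and>
    (\<forall>a\<in>Ce C. \<forall>b\<in>Ce C. src C b = tgt C a \<longrightarrow>
        vcomp C b a \<in> Ce C \<and> src C (vcomp C b a) = src C a \<and> tgt C (vcomp C b a) = tgt C b) \<and>
    (\<forall>a\<in>Ce C. vcomp C (id2 C (tgt C a)) a = a \<and> vcomp C a (id2 C (src C a)) = a) \<and>
    (\<forall>a\<in>Ce C. \<forall>b\<in>Ce C. \<forall>c\<in>Ce C. src C b = tgt C a \<and> src C c = tgt C b \<longrightarrow>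
        vcomp C c (vcomp C b a) = vcomp C (vcomp C c b) a) \<and>
    \<comment> \<open>horizontal composition\<close>
    (\<forall>a\<in>Ce C. \<forall>b\<in>Ce C. dom1 C (src C b) = cod1 C (src C a) \<longrightarrow>
        hcomp C b a \<in> Ce C \<and> src C (hcomp C b a) = comp C (src C b) (src C a) \<and>
        tgt C (hcomp C b a) = comp C (tgt C b) (tgt C a)) \<and>
    (\<forall>a\<in>Ce C. hcomp C (id2 C (id1 C (cod1 C (src C a)))) a = a \<and>
               hcomp C a (id2 C (id1 C (dom1 C (src C a)))) = a) \<and>
    (\<forall>a\<in>Ce C. \<forall>b\<in>Ce C. \<forall>c\<in>Ce C.
        dom1 C (src C b) = cod1 C (src C a) \<and> dom1 C (src C c) = cod1 C (src C b) \<longrightarrow>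
        hcomp C c (hcomp C b a) = hcomp C (hcomp C c b) a) \<and>
    (\<forall>f\<in>Ar C. \<forall>g\<in>Ar C. dom1 C g = cod1 C f \<longrightarrow>
        hcomp C (id2 C g) (id2 C f) = id2 C (comp C g f)) \<and>
    \<comment> \<open>interchange law\<close>
    (\<forall>a\<in>Ce C. \<forall>b\<in>Ce C. \<forall>c\<in>Ce C. \<forall>d\<in>Ce C.
        src C b = tgt C a \<and> src C d = tgt C c \<and> dom1 C (src C c) = cod1 C (src C a) \<longrightarrow>
        hcomp C (vcomp C d c) (vcomp C b a) = vcomp C (hcomp C d b) (hcomp C c a))"

definition all_2cells_invertible :: "('o, 'a, 'c, 'z) twocat_scheme \<Rightarrow> bool" where
  "all_2cells_invertible C \<longleftrightarrow>
    (\<forall>a\<in>Ce C. \<exists>b\<in>Ce C. src C b = tgt C a \<and> tgt C b = src C a \<and>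
        vcomp C b a = id2 C (src C a) \<and> vcomp C a b = id2 C (tgt C a))"

text \<open>An m-simplex of NC (a normal lax functor [m] --> C) is represented by the
  triple (u_i, u_{j,i}, u_{l,j,i}), with u_{j,i} given for i <= j <= m and
  u_{l,j,i} for i <= j <= l <= m; all other entries are undefined, so that
  equality of simplices is equality of the data.\<close>

type_synonym ('o, 'a, 'c) simp = "(nat \<Rightarrow> 'o) \<times> (nat \<Rightarrow> nat \<Rightarrow> 'a) \<times> (nat \<Rightarrow> nat \<Rightarrow> nat \<Rightarrow> 'c)"

definition sob :: "('o, 'a, 'c) simp \<Rightarrow> nat \<Rightarrow> 'o" where
  "sob u = fst u"
definition sar :: "('o, 'a, 'c) simp \<Rightarrow> nat \<Rightarrow> nat \<Rightarrow> 'a" where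
  "sar u = fst (snd u)"
definition sce :: "('o, 'a, 'c) simp \<Rightarrow> nat \<Rightarrow> nat \<Rightarrow> nat \<Rightarrow> 'c" where
  "sce u = snd (snd u)"

definition nerve_simplex :: "('o, 'a, 'c, 'z) twocat_scheme \<Rightarrow> nat \<Rightarrow> ('o, 'a, 'c) simp \<Rightarrow> bool" where
  "nerve_simplex C m u \<longleftrightarrow>
    (\<forall>i. i \<le> m \<longrightarrow> sob u i \<in> Ob C) \<and>
    (\<forall>i. \<not> i \<le> m \<longrightarrow> sob u i = undefined) \<and>
    (\<forall>i j. i \<le> j \<and> j \<le> m \<longrightarrow> sar u j i \<in> Ar C \<and>
        dom1 C (sar u j i) = sob u i \<and> cod1 C (sar u j i) = sob u j) \<and>
    (\<forall>i. i \<le> m \<longrightarrow> sar u i i = id1 C (sob u i)) \<and>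
    (\<forall>i j. \<not> (i \<le> j \<and> j \<le> m) \<longrightarrow> sar u j i = undefined) \<and>
    (\<forall>i j l. i \<le> j \<and> j \<le> l \<and> l \<le> m \<longrightarrow> sce u l j i \<in> Ce C \<and>
        src C (sce u l j i) = sar u l i \<and>
        tgt C (sce u l j i) = comp C (sar u l j) (sar u j i)) \<and>
    (\<forall>i j l. i \<le> j \<and> j \<le> l \<and> l \<le> m \<and> (i = j \<or> j = l) \<longrightarrow>
        sce u l j i = id2 C (sar u l i)) \<and>
    (\<forall>i j l. \<not> (i \<le> j \<and> j \<le> l \<and> l \<le> m) \<longrightarrow> sce u l j i = undefined) \<and>
    (\<forall>i j k l. i < j \<and> j < k \<and> k < l \<and> l \<le> m \<longrightarrow>
        vcomp C (hcomp C (id2 C (sar u l k)) (sce u k j i)) (sce u l k i) =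
        vcomp C (hcomp C (sce u l k j) (id2 C (sar u j i))) (sce u l j i))"

definition ord_map :: "nat \<Rightarrow> nat \<Rightarrow> (nat \<Rightarrow> nat) \<Rightarrow> bool" where
  "ord_map m' m \<theta> \<longleftrightarrow> (\<forall>i. i \<le> m' \<longrightarrow> \<theta> i \<le> m) \<and> (\<forall>i j. i \<le> j \<and> j \<le> m' \<longrightarrow> \<theta> i \<le> \<theta> j)"

definition simp_act :: "('o, 'a, 'c) simp \<Rightarrow> nat \<Rightarrow> (nat \<Rightarrow> nat) \<Rightarrow> ('o, 'a, 'c) simp" where
  "simp_act u m' \<theta> =
    ((\<lambda>i. if i \<le> m' then sob u (\<theta> i) else undefined),
     (\<lambda>j i. if i \<le> j \<and> j \<le> m' then sar u (\<theta> j) (\<theta> i) else undefined),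
     (\<lambda>l j i. if i \<le> j \<and> j \<le> l \<and> l \<le> m' then sce u (\<theta> l) (\<theta> j) (\<theta> i) else undefined))"

text \<open>An m-simplex of Delta^n is an order-preserving map a : [m] --> [n],
  represented as (m, a) with a i = 0 for i > m (canonical representative).\<close>

definition delta_simplex :: "nat \<Rightarrow> nat \<times> (nat \<Rightarrow> nat) \<Rightarrow> bool" where
  "delta_simplex n s \<longleftrightarrow> ord_map (fst s) n (snd s) \<and> (\<forall>i. fst s < i \<longrightarrow> snd s i = 0)"

definition norm_map :: "nat \<Rightarrow> (nat \<Rightarrow> nat) \<Rightarrow> nat \<Rightarrow> nat" where
  "norm_map m a = (\<lambda>i. if i \<le> m then a i else 0)"

definition in_F :: "nat \<Rightarrow> nat \<Rightarrow> nat \<times> (nat \<Rightarrow> nat) \<Rightarrow> bool" where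
  "in_F n k s \<longleftrightarrow> delta_simplex n s \<and> (snd s (fst s) < n \<or> k \<le> snd s 0)"

text \<open>N^k_n C: simplicial maps F_k Delta^n --> NC, represented as functions on
  the simplices of F_k Delta^n (undefined elsewhere).\<close>

definition NK :: "('o, 'a, 'c, 'z) twocat_scheme \<Rightarrow> nat \<Rightarrow> nat \<Rightarrow>
    (nat \<times> (nat \<Rightarrow> nat) \<Rightarrow> ('o, 'a, 'c) simp) set" where
  "NK C n k = {f.
     (\<forall>s. in_F n k s \<longrightarrow> nerve_simplex C (fst s) (f s)) \<and>
     (\<forall>s. \<not> in_F n k s \<longrightarrow> f s = undefined) \<and>
     (\<forall>m a m' \<theta>. in_F n k (m, a) \<and> ord_map m' m \<theta> \<longrightarrow>
         f (m', norm_map m' (a \<circ> \<theta>)) = simp_act (f (m, a)) m' \<theta>)}"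

definition restr :: "nat \<Rightarrow> nat \<Rightarrow> (nat \<times> (nat \<Rightarrow> nat) \<Rightarrow> ('o, 'a, 'c) simp) \<Rightarrow>
    (nat \<times> (nat \<Rightarrow> nat) \<Rightarrow> ('o, 'a, 'c) simp)" where
  "restr n k f = (\<lambda>s. if in_F n k s then f s else undefined)"

definition edge :: "nat \<Rightarrow> nat \<Rightarrow> nat \<times> (nat \<Rightarrow> nat)" where
  "edge i j = (1, \<lambda>x. if x = 0 then i else if x = 1 then j else 0)"

definition tri :: "nat \<Rightarrow> nat \<Rightarrow> nat \<Rightarrow> nat \<times> (nat \<Rightarrow> nat)" where
  "tri i j l = (2, \<lambda>x. if x = 0 then i else if x = 1 then j else if x = 2 then l else 0)"

definition u_ar :: "(nat \<times> (nat \<Rightarrow> nat) \<Rightarrow> ('o, 'a, 'c) simp) \<Rightarrow> nat \<Rightarrow> nat \<Rightarrow> 'a" where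
  "u_ar u j i = sar (u (edge i j)) 1 0"

definition u_ce :: "(nat \<times> (nat \<Rightarrow> nat) \<Rightarrow> ('o, 'a, 'c) simp) \<Rightarrow> nat \<Rightarrow> nat \<Rightarrow> nat \<Rightarrow> 'c" where
  "u_ce u l j i = sce (u (tri i j l)) 2 1 0"

definition phi :: "('o, 'a, 'c, 'z) twocat_scheme \<Rightarrow> nat \<Rightarrow> nat \<Rightarrow>
    (nat \<times> (nat \<Rightarrow> nat) \<Rightarrow> ('o, 'a, 'c) simp) \<Rightarrow> 'a" where
  "phi C n k u = comp C (u_ar u n k) (u_ar u k (k - 1))"

end

theory Submission
  imports Defs
begin

locale tc =
  fixes C :: "('o, 'a, 'c, 'z) twocat_scheme"
  assumes tc: "two_category C"
    and inv2: "all_2cells_invertible C"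
begin


lemmas tcd = tc[unfolded two_category_def]
lemmas T1 = tcd[THEN conjunct1]
lemmas T2 = tcd[THEN conjunct2, THEN conjunct1]
lemmas T3 = tcd[THEN conjunct2, THEN conjunct2, THEN conjunct1]
lemmas T4 = tcd[THEN conjunct2, THEN conjunct2, THEN conjunct2, THEN conjunct1]
lemmas T5 = tcd[THEN conjunct2, THEN conjunct2, THEN conjunct2, THEN conjunct2, THEN conjunct1]
lemmas T6 = tcd[THEN conjunct2, THEN conjunct2, THEN conjunct2, THEN conjunct2, THEN conjunct2, THEN conjunct1]
lemmas T7 = tcd[THEN conjunct2, THEN conjunct2, THEN conjunct2, THEN conjunct2, THEN conjunct2, THEN conjunct2, THEN conjunct1]
lemmas T8 = tcd[THEN conjunct2, THEN conjunct2, THEN conjunct2, THEN conjunct2, THEN conjunct2, THEN conjunct2, THEN conjunct2, THEN conjunct1]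
lemmas T9 = tcd[THEN conjunct2, THEN conjunct2, THEN conjunct2, THEN conjunct2, THEN conjunct2, THEN conjunct2, THEN conjunct2, THEN conjunct2, THEN conjunct1]
lemmas T10 = tcd[THEN conjunct2, THEN conjunct2, THEN conjunct2, THEN conjunct2, THEN conjunct2, THEN conjunct2, THEN conjunct2, THEN conjunct2, THEN conjunct2, THEN conjunct1]
lemmas T11 = tcd[THEN conjunct2, THEN conjunct2, THEN conjunct2, THEN conjunct2, THEN conjunct2, THEN conjunct2, THEN conjunct2, THEN conjunct2, THEN conjunct2, THEN conjunct2, THEN conjunct1]
lemmas T12 = tcd[THEN conjunct2, THEN conjunct2, THEN conjunct2, THEN conjunct2, THEN conjunct2, THEN conjunct2, THEN conjunct2, THEN conjunct2, THEN conjunct2, THEN conjunct2, THEN conjunct2, THEN conjunct1]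
lemmas T13 = tcd[THEN conjunct2, THEN conjunct2, THEN conjunct2, THEN conjunct2, THEN conjunct2, THEN conjunct2, THEN conjunct2, THEN conjunct2, THEN conjunct2, THEN conjunct2, THEN conjunct2, THEN conjunct2, THEN conjunct1]
lemmas T14 = tcd[THEN conjunct2, THEN conjunct2, THEN conjunct2, THEN conjunct2, THEN conjunct2, THEN conjunct2, THEN conjunct2, THEN conjunct2, THEN conjunct2, THEN conjunct2, THEN conjunct2, THEN conjunct2, THEN conjunct2, THEN conjunct1]
lemmas T15 = tcd[THEN conjunct2, THEN conjunct2, THEN conjunct2, THEN conjunct2, THEN conjunct2, THEN conjunct2, THEN conjunct2, THEN conjunct2, THEN conjunct2, THEN conjunct2, THEN conjunct2, THEN conjunct2, THEN conjunct2, THEN conjunct2]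

abbreviation "vc \<equiv> vcomp C"
abbreviation "hc \<equiv> hcomp C"
abbreviation "i1 \<equiv> id1 C"
abbreviation "i2 \<equiv> id2 C"
abbreviation "cp \<equiv> comp C"
abbreviation "d1 \<equiv> dom1 C"
abbreviation "c1 \<equiv> cod1 C"
abbreviation "sr \<equiv> src C"
abbreviation "tg \<equiv> tgt C"

lemma ar_dom[simp]: "f \<in> Ar C \<Longrightarrow> d1 f \<in> Ob C"
  and ar_cod[simp]: "f \<in> Ar C \<Longrightarrow> c1 f \<in> Ob C"
  by (meson T1)+

lemma id1_ar[simp]: "x \<in> Ob C \<Longrightarrow> i1 x \<in> Ar C"
  and id1_dom[simp]: "x \<in> Ob C \<Longrightarrow> d1 (i1 x) = x"
  and id1_cod[simp]: "x \<in> Ob C \<Longrightarrow> c1 (i1 x) = x"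
  by (meson T2)+

lemma comp_ar[simp]: "f \<in> Ar C \<Longrightarrow> g \<in> Ar C \<Longrightarrow> d1 g = c1 f \<Longrightarrow> cp g f \<in> Ar C"
  and comp_dom[simp]: "f \<in> Ar C \<Longrightarrow> g \<in> Ar C \<Longrightarrow> d1 g = c1 f \<Longrightarrow> d1 (cp g f) = d1 f"
  and comp_cod[simp]: "f \<in> Ar C \<Longrightarrow> g \<in> Ar C \<Longrightarrow> d1 g = c1 f \<Longrightarrow> c1 (cp g f) = c1 g"
  by (meson T3)+

lemma comp_id_l[simp]: "f \<in> Ar C \<Longrightarrow> x = c1 f \<Longrightarrow> cp (i1 x) f = f"
  and comp_id_r[simp]: "f \<in> Ar C \<Longrightarrow> x = d1 f \<Longrightarrow> cp f (i1 x) = f"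
  by (meson T4)+

lemma comp_assoc: "f \<in> Ar C \<Longrightarrow> g \<in> Ar C \<Longrightarrow> h \<in> Ar C \<Longrightarrow> d1 g = c1 f \<Longrightarrow> d1 h = c1 g \<Longrightarrow>
   cp h (cp g f) = cp (cp h g) f"
  by (meson T5)

lemma ce_src[simp]: "a \<in> Ce C \<Longrightarrow> sr a \<in> Ar C"
  and ce_tgt[simp]: "a \<in> Ce C \<Longrightarrow> tg a \<in> Ar C"
  using T6 by blast+
lemma ce_dom: "a \<in> Ce C \<Longrightarrow> d1 (tg a) = d1 (sr a)"
  using T6 by force
lemma ce_cod: "a \<in> Ce C \<Longrightarrow> c1 (tg a) = c1 (sr a)"
  using T6 by force

lemma id2_ce[simp]: "f \<in> Ar C \<Longrightarrow> i2 f \<in> Ce C"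
  and id2_src[simp]: "f \<in> Ar C \<Longrightarrow> sr (i2 f) = f"
  and id2_tgt[simp]: "f \<in> Ar C \<Longrightarrow> tg (i2 f) = f"
  by (meson T7)+

lemma vc_ce[simp]: "a \<in> Ce C \<Longrightarrow> b \<in> Ce C \<Longrightarrow> sr b = tg a \<Longrightarrow> vc b a \<in> Ce C"
  and vc_src[simp]: "a \<in> Ce C \<Longrightarrow> b \<in> Ce C \<Longrightarrow> sr b = tg a \<Longrightarrow> sr (vc b a) = sr a"
  and vc_tgt[simp]: "a \<in> Ce C \<Longrightarrow> b \<in> Ce C \<Longrightarrow> sr b = tg a \<Longrightarrow> tg (vc b a) = tg b"
  by (meson T8)+

lemma vc_id_l[simp]: "a \<in> Ce C \<Longrightarrow> f = tg a \<Longrightarrow> vc (i2 f) a = a"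
  and vc_id_r[simp]: "a \<in> Ce C \<Longrightarrow> f = sr a \<Longrightarrow> vc a (i2 f) = a"
  by (meson T9)+

lemma vc_assoc: "a \<in> Ce C \<Longrightarrow> b \<in> Ce C \<Longrightarrow> c \<in> Ce C \<Longrightarrow> sr b = tg a \<Longrightarrow> sr c = tg b \<Longrightarrow>
   vc c (vc b a) = vc (vc c b) a"
  by (meson T10)

lemma hc_ce[simp]: "a \<in> Ce C \<Longrightarrow> b \<in> Ce C \<Longrightarrow> d1 (sr b) = c1 (sr a) \<Longrightarrow> hc b a \<in> Ce C"
  and hc_src[simp]: "a \<in> Ce C \<Longrightarrow> b \<in> Ce C \<Longrightarrow> d1 (sr b) = c1 (sr a) \<Longrightarrow> sr (hc b a) = cp (sr b) (sr a)"
  and hc_tgt[simp]: "a \<in> Ce C \<Longrightarrow> b \<in> Ce C \<Longrightarrow> d1 (sr b) = c1 (sr a) \<Longrightarrow> tg (hc b a) = cp (tg b) (tg a)"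
  by (meson T11)+

lemma hc_id_l: "a \<in> Ce C \<Longrightarrow> hc (i2 (i1 (c1 (sr a)))) a = a"
  and hc_id_r: "a \<in> Ce C \<Longrightarrow> hc a (i2 (i1 (d1 (sr a)))) = a"
  by (meson T12)+

lemma hc_assoc: "a \<in> Ce C \<Longrightarrow> b \<in> Ce C \<Longrightarrow> c \<in> Ce C \<Longrightarrow> d1 (sr b) = c1 (sr a) \<Longrightarrow> d1 (sr c) = c1 (sr b) \<Longrightarrow>
   hc c (hc b a) = hc (hc c b) a"
  by (meson T13)

lemma hc_id2[simp]: "f \<in> Ar C \<Longrightarrow> g \<in> Ar C \<Longrightarrow> d1 g = c1 f \<Longrightarrow> hc (i2 g) (i2 f) = i2 (cp g f)"
  by (meson T14)

lemma interchange: "a \<in> Ce C \<Longrightarrow> b \<in> Ce C \<Longrightarrow> c \<in> Ce C \<Longrightarrow> d \<in> Ce C \<Longrightarrow>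
   sr b = tg a \<Longrightarrow> sr d = tg c \<Longrightarrow> d1 (sr c) = c1 (sr a) \<Longrightarrow>
   hc (vc d c) (vc b a) = vc (hc d b) (hc c a)"
  by (meson T15)

lemma ce_dom'[simp]: "a \<in> Ce C \<Longrightarrow> d1 (tg a) = d1 (sr a)" by (rule ce_dom)
lemma ce_cod'[simp]: "a \<in> Ce C \<Longrightarrow> c1 (tg a) = c1 (sr a)" by (rule ce_cod)

lemma L_id1: "a \<in> Ce C \<Longrightarrow> x = c1 (sr a) \<Longrightarrow> hc (i2 (i1 x)) a = a"
  using hc_id_l by simp
lemma R_id1: "a \<in> Ce C \<Longrightarrow> x = d1 (sr a) \<Longrightarrow> hc a (i2 (i1 x)) = a"
  using hc_id_r by simp

lemma L_vc: "a \<in> Ce C \<Longrightarrow> b \<in> Ce C \<Longrightarrow> sr b = tg a \<Longrightarrow> g \<in> Ar C \<Longrightarrow> d1 g = c1 (sr a) \<Longrightarrow>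
   hc (i2 g) (vc b a) = vc (hc (i2 g) b) (hc (i2 g) a)"
  using interchange[of a b "i2 g" "i2 g"] by simp

lemma R_vc: "a \<in> Ce C \<Longrightarrow> b \<in> Ce C \<Longrightarrow> sr b = tg a \<Longrightarrow> f \<in> Ar C \<Longrightarrow> d1 (sr a) = c1 f \<Longrightarrow>
   hc (vc b a) (i2 f) = vc (hc b (i2 f)) (hc a (i2 f))"
  using interchange[of "i2 f" "i2 f" a b] by simp

lemma exch1: "a \<in> Ce C \<Longrightarrow> b \<in> Ce C \<Longrightarrow> d1 (sr b) = c1 (sr a) \<Longrightarrow>
   hc b a = vc (hc b (i2 (tg a))) (hc (i2 (sr b)) a)"
proof -
  assume h: "a \<in> Ce C" "b \<in> Ce C" "d1 (sr b) = c1 (sr a)"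
  have "hc b a = hc (vc b (i2 (sr b))) (vc (i2 (tg a)) a)" using h by simp
  also have "\<dots> = vc (hc b (i2 (tg a))) (hc (i2 (sr b)) a)"
    using h by (intro interchange) auto
  finally show ?thesis .
qed

lemma exch2: "a \<in> Ce C \<Longrightarrow> b \<in> Ce C \<Longrightarrow> d1 (sr b) = c1 (sr a) \<Longrightarrow>
   hc b a = vc (hc (i2 (tg b)) a) (hc b (i2 (sr a)))"
proof -
  assume h: "a \<in> Ce C" "b \<in> Ce C" "d1 (sr b) = c1 (sr a)"
  have "hc b a = hc (vc (i2 (tg b)) b) (vc a (i2 (sr a)))" using h by simp
  also have "\<dots> = vc (hc (i2 (tg b)) a) (hc b (i2 (sr a)))"
    using h by (intro interchange) auto
  finally show ?thesis .
qed

lemma exch: "a \<in> Ce C \<Longrightarrow> b \<in> Ce C \<Longrightarrow> d1 (sr b) = c1 (sr a) \<Longrightarrow>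
   vc (hc (i2 (tg b)) a) (hc b (i2 (sr a))) = vc (hc b (i2 (tg a))) (hc (i2 (sr b)) a)"
  using exch1 exch2 by metis

lemma L_L: "a \<in> Ce C \<Longrightarrow> g \<in> Ar C \<Longrightarrow> h \<in> Ar C \<Longrightarrow> d1 g = c1 (sr a) \<Longrightarrow> d1 h = c1 g \<Longrightarrow>
   hc (i2 h) (hc (i2 g) a) = hc (i2 (cp h g)) a"
  by (subst hc_assoc) auto

lemma R_R: "a \<in> Ce C \<Longrightarrow> f \<in> Ar C \<Longrightarrow> e \<in> Ar C \<Longrightarrow> d1 (sr a) = c1 f \<Longrightarrow> d1 f = c1 e \<Longrightarrow>
   hc (hc a (i2 f)) (i2 e) = hc a (i2 (cp f e))"
  by (subst hc_assoc[symmetric]) auto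

lemma L_R: "a \<in> Ce C \<Longrightarrow> f \<in> Ar C \<Longrightarrow> g \<in> Ar C \<Longrightarrow> d1 (sr a) = c1 f \<Longrightarrow> d1 g = c1 (sr a) \<Longrightarrow>
   hc (i2 g) (hc a (i2 f)) = hc (hc (i2 g) a) (i2 f)"
  by (subst hc_assoc) auto

definition inv2c :: "'c \<Rightarrow> 'c" where
  "inv2c a = (SOME b. b \<in> Ce C \<and> sr b = tg a \<and> tg b = sr a \<and> vc b a = i2 (sr a) \<and> vc a b = i2 (tg a))"

lemma inv2c: assumes "a \<in> Ce C" shows "inv2c a \<in> Ce C \<and> sr (inv2c a) = tg a \<and> tg (inv2c a) = sr a \<and>
   vc (inv2c a) a = i2 (sr a) \<and> vc a (inv2c a) = i2 (tg a)"
proof -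
  from inv2 assms obtain b where "b \<in> Ce C \<and> sr b = tg a \<and> tg b = sr a \<and> vc b a = i2 (sr a) \<and> vc a b = i2 (tg a)"
    unfolding all_2cells_invertible_def by blast
  then show ?thesis unfolding inv2c_def by (rule someI)
qed

lemma inv2c_ce[simp]: "a \<in> Ce C \<Longrightarrow> inv2c a \<in> Ce C"
  and inv2c_src[simp]: "a \<in> Ce C \<Longrightarrow> sr (inv2c a) = tg a"
  and inv2c_tgt[simp]: "a \<in> Ce C \<Longrightarrow> tg (inv2c a) = sr a"
  using inv2c by blast+

lemma cancel_vc: "g \<in> Ce C \<Longrightarrow> x \<in> Ce C \<Longrightarrow> y \<in> Ce C \<Longrightarrow> tg x = sr g \<Longrightarrow> tg y = sr g \<Longrightarrow>
   vc g x = vc g y \<Longrightarrow> x = y"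
proof -
  assume h: "g \<in> Ce C" "x \<in> Ce C" "y \<in> Ce C" "tg x = sr g" "tg y = sr g" "vc g x = vc g y"
  have e1: "vc (inv2c g) (vc g x) = x" using h(1-5) inv2c[of g] by (simp add: vc_assoc)
  have e2: "vc (inv2c g) (vc g y) = y" using h(1-5) inv2c[of g] by (simp add: vc_assoc)
  show ?thesis using e1 e2 h(6) by metis
qed

lemma inv_cancel: "g \<in> Ce C \<Longrightarrow> x \<in> Ce C \<Longrightarrow> tg x = tg g \<Longrightarrow> vc g (vc (inv2c g) x) = x"
proof -
  assume h: "g \<in> Ce C" "x \<in> Ce C" "tg x = tg g"
  have "vc g (vc (inv2c g) x) = vc (vc g (inv2c g)) x" using h by (simp add: vc_assoc)
  also have "\<dots> = x" using h inv2c[of g] by simp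
  finally show ?thesis .
qed

end


definition trith :: "nat \<Rightarrow> nat \<Rightarrow> nat \<Rightarrow> nat \<Rightarrow> nat" where
  "trith i j l = (\<lambda>x. if x = 0 then i else if x = 1 then j else l)"

definition quad :: "nat \<Rightarrow> nat \<Rightarrow> nat \<Rightarrow> nat \<Rightarrow> nat \<times> (nat \<Rightarrow> nat)" where
  "quad p q r s = (3, \<lambda>x. if x = 0 then p else if x = 1 then q else if x = 2 then r else if x = 3 then s else 0)"

definition inF2 :: "nat \<Rightarrow> nat \<Rightarrow> nat \<Rightarrow> nat \<Rightarrow> bool" where
  "inF2 n k p s \<longleftrightarrow> p \<le> s \<and> s \<le> n \<and> (s < n \<or> k \<le> p)"

definition cocy :: "('o, 'a, 'c, 'z) twocat_scheme \<Rightarrow> ('o, 'a, 'c) simp \<Rightarrow> nat \<Rightarrow> nat \<Rightarrow> nat \<Rightarrow> nat \<Rightarrow> bool" where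
  "cocy C G p q r s \<longleftrightarrow>
     vcomp C (hcomp C (id2 C (sar G s r)) (sce G r q p)) (sce G s r p) =
     vcomp C (hcomp C (sce G s r q) (id2 C (sar G q p))) (sce G s q p)"

definition loc :: "('o, 'a, 'c, 'z) twocat_scheme \<Rightarrow> nat \<Rightarrow> nat \<Rightarrow> ('o, 'a, 'c) simp \<Rightarrow> bool" where
  "loc C n k G \<longleftrightarrow>
   (\<forall>p. p \<le> n \<longrightarrow> sob G p \<in> Ob C) \<and>
   (\<forall>p q. inF2 n k p q \<longrightarrow> sar G q p \<in> Ar C \<and> dom1 C (sar G q p) = sob G p \<and> cod1 C (sar G q p) = sob G q) \<and>
   (\<forall>p. p \<le> n \<longrightarrow> sar G p p = id1 C (sob G p)) \<and>
   (\<forall>p q r. p \<le> q \<and> q \<le> r \<and> inF2 n k p r \<longrightarrow> sce G r q p \<in> Ce C \<and> src C (sce G r q p) = sar G r p \<and>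
       tgt C (sce G r q p) = comp C (sar G r q) (sar G q p)) \<and>
   (\<forall>p q r. p \<le> q \<and> q \<le> r \<and> inF2 n k p r \<and> (p = q \<or> q = r) \<longrightarrow> sce G r q p = id2 C (sar G r p)) \<and>
   (\<forall>p q r s. p < q \<and> q < r \<and> r < s \<and> inF2 n k p s \<longrightarrow> cocy C G p q r s)"

definition dat :: "(nat \<times> (nat \<Rightarrow> nat) \<Rightarrow> ('o, 'a, 'c) simp) \<Rightarrow> ('o, 'a, 'c) simp" where
  "dat u = ((\<lambda>p. sob (u (tri p p p)) 0), (\<lambda>q p. sar (u (tri p q q)) 1 0), (\<lambda>r q p. sce (u (tri p q r)) 2 1 0))"

definition ext :: "nat \<Rightarrow> nat \<Rightarrow> ('o, 'a, 'c) simp \<Rightarrow> (nat \<times> (nat \<Rightarrow> nat) \<Rightarrow> ('o, 'a, 'c) simp)" where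
  "ext n k G = (\<lambda>s. if in_F n k s then simp_act G (fst s) (snd s) else undefined)"

lemma sob_dat: "sob (dat u) p = sob (u (tri p p p)) 0" by (simp add: dat_def sob_def)
lemma sar_dat: "sar (dat u) q p = sar (u (tri p q q)) 1 0" by (simp add: dat_def sar_def)
lemma sce_dat: "sce (dat u) r q p = sce (u (tri p q r)) 2 1 0" by (simp add: dat_def sce_def)

lemma sob_act: "sob (simp_act v m \<theta>) = (\<lambda>i. if i \<le> m then sob v (\<theta> i) else undefined)"
  by (simp add: simp_act_def sob_def)
lemma sar_act: "sar (simp_act v m \<theta>) = (\<lambda>j i. if i \<le> j \<and> j \<le> m then sar v (\<theta> j) (\<theta> i) else undefined)"
  by (simp add: simp_act_def sar_def)
lemma sce_act: "sce (simp_act v m \<theta>) = (\<lambda>l j i. if i \<le> j \<and> j \<le> l \<and> l \<le> m then sce v (\<theta> l) (\<theta> j) (\<theta> i) else undefined)"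
  by (simp add: simp_act_def sce_def)

lemma simp_eqI: "sob x = sob y \<Longrightarrow> sar x = sar y \<Longrightarrow> sce x = sce y \<Longrightarrow> x = y"
  by (cases x; cases y) (simp add: sob_def sar_def sce_def)

lemma inF_mono: "in_F n k (m, a) \<Longrightarrow> i \<le> j \<Longrightarrow> j \<le> m \<Longrightarrow> a i \<le> a j"
  by (simp add: in_F_def delta_simplex_def ord_map_def)
lemma inF_bound: "in_F n k (m, a) \<Longrightarrow> i \<le> m \<Longrightarrow> a i \<le> n"
  by (simp add: in_F_def delta_simplex_def ord_map_def)
lemma inF_zero: "in_F n k (m, a) \<Longrightarrow> m < i \<Longrightarrow> a i = 0"
  by (simp add: in_F_def delta_simplex_def)
lemma inF_F2: "in_F n k (m, a) \<Longrightarrow> i \<le> l \<Longrightarrow> l \<le> m \<Longrightarrow> inF2 n k (a i) (a l)"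
proof -
  assume h: "in_F n k (m, a)" "i \<le> l" "l \<le> m"
  have "a l \<le> a m" "a 0 \<le> a i" "a i \<le> a l" "a l \<le> n" using h inF_mono inF_bound by auto
  moreover have "a m < n \<or> k \<le> a 0" using h by (simp add: in_F_def)
  ultimately show ?thesis unfolding inF2_def by auto
qed

lemma inF2_sub: "inF2 n k p s \<Longrightarrow> p \<le> p' \<Longrightarrow> p' \<le> s' \<Longrightarrow> s' \<le> s \<Longrightarrow> inF2 n k p' s'"
  unfolding inF2_def by auto

lemma tri_eq: "(2::nat, norm_map 2 (a \<circ> trith i j l)) = tri (a i) (a j) (a l)"
  by (auto simp: tri_def norm_map_def trith_def fun_eq_iff)

lemma trith_ord: "i \<le> j \<Longrightarrow> j \<le> l \<Longrightarrow> l \<le> m \<Longrightarrow> ord_map 2 m (trith i j l)"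
  by (auto simp: ord_map_def trith_def)

lemma in_F_tri: "p \<le> q \<Longrightarrow> q \<le> r \<Longrightarrow> inF2 n k p r \<Longrightarrow> in_F n k (tri p q r)"
  by (auto simp: in_F_def tri_def delta_simplex_def ord_map_def inF2_def)

lemma in_F_quad: "p \<le> q \<Longrightarrow> q \<le> r \<Longrightarrow> r \<le> s \<Longrightarrow> inF2 n k p s \<Longrightarrow> in_F n k (quad p q r s)"
  by (auto simp: in_F_def quad_def delta_simplex_def ord_map_def inF2_def)

lemma in_F_edge: "inF2 n k p q \<Longrightarrow> in_F n k (edge p q)"
  by (auto simp: in_F_def edge_def delta_simplex_def ord_map_def inF2_def)

lemma NK_compat: "u \<in> NK C n k \<Longrightarrow> in_F n k (m, a) \<Longrightarrow> ord_map m' m \<theta> \<Longrightarrow>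
   u (m', norm_map m' (a \<circ> \<theta>)) = simp_act (u (m, a)) m' \<theta>"
  unfolding NK_def by blast

lemma NK_nerve: "u \<in> NK C n k \<Longrightarrow> in_F n k s \<Longrightarrow> nerve_simplex C (fst s) (u s)"
  unfolding NK_def by blast

lemma NK_undef: "u \<in> NK C n k \<Longrightarrow> \<not> in_F n k s \<Longrightarrow> u s = undefined"
  unfolding NK_def by blast

lemma NK_tri: "u \<in> NK C n k \<Longrightarrow> in_F n k (m, a) \<Longrightarrow> i \<le> j \<Longrightarrow> j \<le> l \<Longrightarrow> l \<le> m \<Longrightarrow>
   u (tri (a i) (a j) (a l)) = simp_act (u (m, a)) 2 (trith i j l)"
  using NK_compat[of u C n k m a 2 "trith i j l"] trith_ord[of i j l m] tri_eq[of a i j l] by simp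

lemma NK_dat: assumes u: "u \<in> NK C n k" and F: "in_F n k (m, a)"
  shows "u (m, a) = simp_act (dat u) m a"
proof -
  have ns: "nerve_simplex C m (u (m, a))" using NK_nerve[OF u F] by simp
  show ?thesis
  proof (rule simp_eqI)
    show "sob (u (m, a)) = sob (simp_act (dat u) m a)"
    proof
      fix i show "sob (u (m, a)) i = sob (simp_act (dat u) m a) i"
      proof (cases "i \<le> m")
        case True
        then show ?thesis using NK_tri[OF u F, of i i i]
          by (simp add: sob_act sob_dat trith_def)
      next
        case False
        then show ?thesis using ns by (simp add: sob_act nerve_simplex_def)
      qed
    qed
    show "sar (u (m, a)) = sar (simp_act (dat u) m a)"
    proof (intro ext)
      fix j i show "sar (u (m, a)) j i = sar (simp_act (dat u) m a) j i"
      proof (cases "i \<le> j \<and> j \<le> m")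
        case True
        then show ?thesis using NK_tri[OF u F, of i j j]
          by (simp add: sar_act sar_dat trith_def)
      next
        case False
        then show ?thesis using ns by (auto simp add: sar_act nerve_simplex_def)
      qed
    qed
    show "sce (u (m, a)) = sce (simp_act (dat u) m a)"
    proof (intro ext)
      fix l j i show "sce (u (m, a)) l j i = sce (simp_act (dat u) m a) l j i"
      proof (cases "i \<le> j \<and> j \<le> l \<and> l \<le> m")
        case True
        then show ?thesis using NK_tri[OF u F, of i j l]
          by (simp add: sce_act sce_dat trith_def)
      next
        case False
        then show ?thesis using ns by (auto simp add: sce_act nerve_simplex_def)
      qed
    qed
  qed
qed

lemma NK_ext: assumes u: "u \<in> NK C n k" shows "u = ext n k (dat u)"
proof
  fix s show "u s = ext n k (dat u) s"
    using NK_dat[OF u, of "fst s" "snd s"] NK_undef[OF u, of s] by (cases s) (auto simp: ext_def)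
qed

lemma inF_comp: assumes F: "in_F n k (m, a)" and th: "ord_map m' m \<theta>"
  shows "in_F n k (m', norm_map m' (a \<circ> \<theta>))"
proof -
  have a1: "\<theta> i \<le> m" if "i \<le> m'" for i using th that by (simp add: ord_map_def)
  have a2: "\<theta> i \<le> \<theta> j" if "i \<le> j" "j \<le> m'" for i j using th that by (simp add: ord_map_def)
  have "a (\<theta> m') \<le> a m" using a1[of m'] inF_mono[OF F] by simp
  moreover have "a 0 \<le> a (\<theta> 0)" using a1[of 0] inF_mono[OF F] by simp
  moreover have "a m < n \<or> k \<le> a 0" using F by (simp add: in_F_def)
  moreover have "ord_map m' n (norm_map m' (a \<circ> \<theta>))"
    using a1 a2 inF_mono[OF F] inF_bound[OF F] by (auto simp: ord_map_def norm_map_def)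
  ultimately show ?thesis
    by (auto simp: in_F_def delta_simplex_def norm_map_def)
qed

lemma act_comp: assumes F: "in_F n k (m, a)" and th: "ord_map m' m \<theta>"
  shows "simp_act G m' (norm_map m' (a \<circ> \<theta>)) = simp_act (simp_act G m a) m' \<theta>"
proof -
  have a1: "\<theta> i \<le> m" if "i \<le> m'" for i using th that by (simp add: ord_map_def)
  have a2: "\<theta> i \<le> \<theta> j" if "i \<le> j" "j \<le> m'" for i j using th that by (simp add: ord_map_def)
  show ?thesis
    by (rule simp_eqI) (auto simp: sob_act sar_act sce_act norm_map_def fun_eq_iff a1 a2 dest: a2)
qed

lemma ext_NK: assumes h: "\<And>m a. in_F n k (m, a) \<Longrightarrow> nerve_simplex C m (simp_act G m a)"
  shows "ext n k G \<in> NK C n k"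
  unfolding NK_def
proof (intro CollectI conjI allI impI)
  fix s assume "in_F n k s" then show "nerve_simplex C (fst s) (ext n k G s)"
    using h[of "fst s" "snd s"] by (auto simp: ext_def)
next
  fix s assume "\<not> in_F n k s" then show "ext n k G s = undefined" by (simp add: ext_def)
next
  fix m a m' \<theta> assume "in_F n k (m, a) \<and> ord_map m' m \<theta>"
  then show "ext n k G (m', norm_map m' (a \<circ> \<theta>)) = simp_act (ext n k G (m, a)) m' \<theta>"
    using inF_comp act_comp by (simp add: ext_def) blast
qed


context tc
begin

lemma loc_O: assumes L: "loc C n k G" shows "p \<le> n \<Longrightarrow> sob G p \<in> Ob C"
  using L[unfolded loc_def, THEN conjunct1] by blast
lemma loc_A: assumes L: "loc C n k G" shows "inF2 n k p q \<Longrightarrow> sar G q p \<in> Ar C \<and> d1 (sar G q p) = sob G p \<and> c1 (sar G q p) = sob G q"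
  using L[unfolded loc_def, THEN conjunct2, THEN conjunct1] by blast
lemma loc_Aid: assumes L: "loc C n k G" shows "p \<le> n \<Longrightarrow> sar G p p = i1 (sob G p)"
  using L[unfolded loc_def, THEN conjunct2, THEN conjunct2, THEN conjunct1] by blast
lemma loc_Z: assumes L: "loc C n k G" shows "p \<le> q \<Longrightarrow> q \<le> r \<Longrightarrow> inF2 n k p r \<Longrightarrow>
   sce G r q p \<in> Ce C \<and> sr (sce G r q p) = sar G r p \<and> tg (sce G r q p) = cp (sar G r q) (sar G q p)"
  using L[unfolded loc_def, THEN conjunct2, THEN conjunct2, THEN conjunct2, THEN conjunct1] by blast
lemma loc_Zn: assumes L: "loc C n k G" shows "p \<le> q \<Longrightarrow> q \<le> r \<Longrightarrow> inF2 n k p r \<Longrightarrow> p = q \<or> q = r \<Longrightarrow>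
   sce G r q p = i2 (sar G r p)"
  using L[unfolded loc_def, THEN conjunct2, THEN conjunct2, THEN conjunct2, THEN conjunct2, THEN conjunct1] by blast
lemma loc_cocy: assumes L: "loc C n k G" shows "p < q \<Longrightarrow> q < r \<Longrightarrow> r < s \<Longrightarrow> inF2 n k p s \<Longrightarrow> cocy C G p q r s"
  using L[unfolded loc_def, THEN conjunct2, THEN conjunct2, THEN conjunct2, THEN conjunct2, THEN conjunct2] by blast

lemma loc_cocy_all: assumes L: "loc C n k G" and o: "p \<le> q" "q \<le> r" "r \<le> s" and F: "inF2 n k p s"
  shows "cocy C G p q r s"
proof -
  have Fs: "inF2 n k x y" if "p \<le> x" "x \<le> y" "y \<le> s" for x y using inF2_sub[OF F] that by blast
  have bn: "s \<le> n" using F by (simp add: inF2_def)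
  note A = loc_A[OF L Fs] and Z = loc_Z[OF L _ _ Fs] and Zn = loc_Zn[OF L _ _ Fs]
  note Aid = loc_Aid[OF L]
  consider "p = q" | "q = r" | "r = s" | "p < q \<and> q < r \<and> r < s" using o by linarith
  then show ?thesis
  proof cases
    case 1
    have a: "sar G s r \<in> Ar C" "sar G r p \<in> Ar C" "d1 (sar G s r) = c1 (sar G r p)"
      using A[of r s] A[of p r] o by auto
    have z: "sce G s r p \<in> Ce C" "sr (sce G s r p) = sar G s p" "tg (sce G s r p) = cp (sar G s r) (sar G r p)"
      using Z[of p r s] o by auto
    have "d1 (sar G s p) = sob G p" using A[of p s] o by auto
    then show ?thesis unfolding cocy_def using 1 o a z Zn[of p p r] Zn[of p p s] Aid[of p] bn
      by (simp add: R_id1)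
  next
    case 2
    have a: "sar G s q \<in> Ar C" "sar G q p \<in> Ar C" "d1 (sar G s q) = c1 (sar G q p)"
      using A[of q s] A[of p q] o by auto
    have z: "sce G s q p \<in> Ce C" "sr (sce G s q p) = sar G s p" "tg (sce G s q p) = cp (sar G s q) (sar G q p)"
      using Z[of p q s] o by auto
    show ?thesis unfolding cocy_def using 2 o a z Zn[of p q q] Zn[of q q s]
      by simp
  next
    case 3
    have a: "sar G s q \<in> Ar C" "sar G q p \<in> Ar C" "d1 (sar G s q) = c1 (sar G q p)"
      using A[of q s] A[of p q] o by auto
    have z: "sce G s q p \<in> Ce C" "sr (sce G s q p) = sar G s p" "tg (sce G s q p) = cp (sar G s q) (sar G q p)"
      using Z[of p q s] o by auto
    have "c1 (sar G s p) = sob G s" using A[of p s] o by auto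
    then show ?thesis unfolding cocy_def using 3 o a z Zn[of p s s] Zn[of q s s] Aid[of s] bn
      by (simp add: L_id1)
  next
    case 4
    then show ?thesis using loc_cocy[OF L _ _ _ F] by blast
  qed
qed

lemma loc_nerve: assumes L: "loc C n k G" and F: "in_F n k (m, a)"
  shows "nerve_simplex C m (simp_act G m a)"
proof -
  have mo: "a i \<le> a j" if "i \<le> j" "j \<le> m" for i j using inF_mono[OF F] that .
  have F2: "inF2 n k (a i) (a l)" if "i \<le> l" "l \<le> m" for i l using inF_F2[OF F] that .
  have bd: "a i \<le> n" if "i \<le> m" for i using inF_bound[OF F] that .
  show ?thesis unfolding nerve_simplex_def sob_act sar_act sce_act
  proof (intro conjI allI impI)
    fix i assume "i \<le> m" then show "(if i \<le> m then sob G (a i) else undefined) \<in> Ob C"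
      using loc_O[OF L bd] by simp
  next
    fix i j assume h: "i \<le> j \<and> j \<le> m"
    then show "(if i \<le> j \<and> j \<le> m then sar G (a j) (a i) else undefined) \<in> Ar C"
      "d1 (if i \<le> j \<and> j \<le> m then sar G (a j) (a i) else undefined) = (if i \<le> m then sob G (a i) else undefined)"
      "c1 (if i \<le> j \<and> j \<le> m then sar G (a j) (a i) else undefined) = (if j \<le> m then sob G (a j) else undefined)"
      using loc_A[OF L F2[of i j]] by auto
  next
    fix i assume "i \<le> m" then show "(if i \<le> i \<and> i \<le> m then sar G (a i) (a i) else undefined) = i1 (if i \<le> m then sob G (a i) else undefined)"
      using loc_Aid[OF L bd] by simp
  next
    fix i j l assume h: "i \<le> j \<and> j \<le> l \<and> l \<le> m"
    have ij: "inF2 n k (a i) (a j)" "inF2 n k (a j) (a l)" using F2 h by auto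
    have z: "sce G (a l) (a j) (a i) \<in> Ce C \<and> sr (sce G (a l) (a j) (a i)) = sar G (a l) (a i) \<and>
       tg (sce G (a l) (a j) (a i)) = cp (sar G (a l) (a j)) (sar G (a j) (a i))"
      using loc_Z[OF L _ _ F2[of i l]] mo h by auto
    then show "(if i \<le> j \<and> j \<le> l \<and> l \<le> m then sce G (a l) (a j) (a i) else undefined) \<in> Ce C"
      "sr (if i \<le> j \<and> j \<le> l \<and> l \<le> m then sce G (a l) (a j) (a i) else undefined) =
       (if i \<le> l \<and> l \<le> m then sar G (a l) (a i) else undefined)"
      "tg (if i \<le> j \<and> j \<le> l \<and> l \<le> m then sce G (a l) (a j) (a i) else undefined) =
       cp (if j \<le> l \<and> l \<le> m then sar G (a l) (a j) else undefined) (if i \<le> j \<and> j \<le> m then sar G (a j) (a i) else undefined)"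
      using h by auto
  next
    fix i j l assume h: "i \<le> j \<and> j \<le> l \<and> l \<le> m \<and> (i = j \<or> j = l)"
    then show "(if i \<le> j \<and> j \<le> l \<and> l \<le> m then sce G (a l) (a j) (a i) else undefined) =
       i2 (if i \<le> l \<and> l \<le> m then sar G (a l) (a i) else undefined)"
      using loc_Zn[OF L _ _ F2[of i l]] mo by auto
  next
    fix i j k' l assume h: "i < j \<and> j < k' \<and> k' < l \<and> l \<le> m"
    have c: "cocy C G (a i) (a j) (a k') (a l)"
      using loc_cocy_all[OF L _ _ _ F2[of i l]] mo h by auto
    then show "vc (hc (i2 (if k' \<le> l \<and> l \<le> m then sar G (a l) (a k') else undefined))
                 (if i \<le> j \<and> j \<le> k' \<and> k' \<le> m then sce G (a k') (a j) (a i) else undefined))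
         (if i \<le> k' \<and> k' \<le> l \<and> l \<le> m then sce G (a l) (a k') (a i) else undefined) =
        vc (hc (if j \<le> k' \<and> k' \<le> l \<and> l \<le> m then sce G (a l) (a k') (a j) else undefined)
                (i2 (if i \<le> j \<and> j \<le> m then sar G (a j) (a i) else undefined)))
         (if i \<le> j \<and> j \<le> l \<and> l \<le> m then sce G (a l) (a j) (a i) else undefined)"
      using h unfolding cocy_def by auto
  qed (auto)
qed

end


lemma ns_act_facts:
  assumes ns: "nerve_simplex C m (simp_act G m a)"
  shows "\<And>i. i \<le> m \<Longrightarrow> sob G (a i) \<in> Ob C"
    and "\<And>i j. i \<le> j \<Longrightarrow> j \<le> m \<Longrightarrow> sar G (a j) (a i) \<in> Ar C \<and> dom1 C (sar G (a j) (a i)) = sob G (a i) \<and> cod1 C (sar G (a j) (a i)) = sob G (a j)"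
    and "\<And>i. i \<le> m \<Longrightarrow> sar G (a i) (a i) = id1 C (sob G (a i))"
    and "\<And>i j l. i \<le> j \<Longrightarrow> j \<le> l \<Longrightarrow> l \<le> m \<Longrightarrow> sce G (a l) (a j) (a i) \<in> Ce C \<and>
          src C (sce G (a l) (a j) (a i)) = sar G (a l) (a i) \<and> tgt C (sce G (a l) (a j) (a i)) = comp C (sar G (a l) (a j)) (sar G (a j) (a i))"
    and "\<And>i j l. i \<le> j \<Longrightarrow> j \<le> l \<Longrightarrow> l \<le> m \<Longrightarrow> i = j \<or> j = l \<Longrightarrow> sce G (a l) (a j) (a i) = id2 C (sar G (a l) (a i))"
    and "\<And>i j k l. i < j \<Longrightarrow> j < k \<Longrightarrow> k < l \<Longrightarrow> l \<le> m \<Longrightarrow> cocy C G (a i) (a j) (a k) (a l)"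
proof -
  note N = ns[unfolded nerve_simplex_def sob_act sar_act sce_act]
  note N1 = N[THEN conjunct1] and N3 = N[THEN conjunct2, THEN conjunct2, THEN conjunct1]
   and N4 = N[THEN conjunct2, THEN conjunct2, THEN conjunct2, THEN conjunct1]
   and N6 = N[THEN conjunct2, THEN conjunct2, THEN conjunct2, THEN conjunct2, THEN conjunct2, THEN conjunct1]
   and N7 = N[THEN conjunct2, THEN conjunct2, THEN conjunct2, THEN conjunct2, THEN conjunct2, THEN conjunct2, THEN conjunct1]
   and N9 = N[THEN conjunct2, THEN conjunct2, THEN conjunct2, THEN conjunct2, THEN conjunct2, THEN conjunct2, THEN conjunct2, THEN conjunct2]
  show "\<And>i. i \<le> m \<Longrightarrow> sob G (a i) \<in> Ob C" using N1 by auto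
  show "\<And>i j. i \<le> j \<Longrightarrow> j \<le> m \<Longrightarrow> sar G (a j) (a i) \<in> Ar C \<and> dom1 C (sar G (a j) (a i)) = sob G (a i) \<and> cod1 C (sar G (a j) (a i)) = sob G (a j)"
  proof -
    fix i j assume h: "i \<le> j" "j \<le> m"
    then show "sar G (a j) (a i) \<in> Ar C \<and> dom1 C (sar G (a j) (a i)) = sob G (a i) \<and> cod1 C (sar G (a j) (a i)) = sob G (a j)"
      using N3[rule_format, of i j] by auto
  qed
  show "\<And>i. i \<le> m \<Longrightarrow> sar G (a i) (a i) = id1 C (sob G (a i))" using N4 by auto
  show "\<And>i j l. i \<le> j \<Longrightarrow> j \<le> l \<Longrightarrow> l \<le> m \<Longrightarrow> sce G (a l) (a j) (a i) \<in> Ce C \<and>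
          src C (sce G (a l) (a j) (a i)) = sar G (a l) (a i) \<and> tgt C (sce G (a l) (a j) (a i)) = comp C (sar G (a l) (a j)) (sar G (a j) (a i))"
  proof -
    fix i j l assume h: "i \<le> j" "j \<le> l" "l \<le> m"
    then show "sce G (a l) (a j) (a i) \<in> Ce C \<and>
          src C (sce G (a l) (a j) (a i)) = sar G (a l) (a i) \<and> tgt C (sce G (a l) (a j) (a i)) = comp C (sar G (a l) (a j)) (sar G (a j) (a i))"
      using N6[rule_format, of i j l] by auto
  qed
  show "\<And>i j l. i \<le> j \<Longrightarrow> j \<le> l \<Longrightarrow> l \<le> m \<Longrightarrow> i = j \<or> j = l \<Longrightarrow> sce G (a l) (a j) (a i) = id2 C (sar G (a l) (a i))"
  proof -
    fix i j l assume h: "i \<le> j" "j \<le> l" "l \<le> m" "i = j \<or> j = l"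
    then show "sce G (a l) (a j) (a i) = id2 C (sar G (a l) (a i))"
      using N7[rule_format, of i j l] by auto
  qed
  show "\<And>i j k l. i < j \<Longrightarrow> j < k \<Longrightarrow> k < l \<Longrightarrow> l \<le> m \<Longrightarrow> cocy C G (a i) (a j) (a k) (a l)"
  proof -
    fix i j k l assume h: "i < j" "j < k" "k < l" "l \<le> m"
    then show "cocy C G (a i) (a j) (a k) (a l)"
      using N9[rule_format, of i j k l] unfolding cocy_def by auto
  qed
qed

lemma NK_ns: "u \<in> NK C n k \<Longrightarrow> in_F n k (m, a) \<Longrightarrow> nerve_simplex C m (simp_act (dat u) m a)"
  using NK_nerve[of u C n k "(m, a)"] NK_dat[of u C n k m a] by simp

lemma tri_split: "tri p q r = (2, snd (tri p q r))" by (simp add: tri_def)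
lemma quad_split: "quad p q r s = (3, snd (quad p q r s))" by (simp add: quad_def)
lemma tri_vals: "snd (tri p q r) 0 = p" "snd (tri p q r) 1 = q" "snd (tri p q r) 2 = r"
  by (simp_all add: tri_def)
lemma quad_vals: "snd (quad p q r s) 0 = p" "snd (quad p q r s) 1 = q" "snd (quad p q r s) 2 = r" "snd (quad p q r s) 3 = s"
  by (simp_all add: quad_def)

lemma NK_ns_tri: "u \<in> NK C n k \<Longrightarrow> p \<le> q \<Longrightarrow> q \<le> r \<Longrightarrow> inF2 n k p r \<Longrightarrow>
  nerve_simplex C 2 (simp_act (dat u) 2 (snd (tri p q r)))"
  using NK_ns[of u C n k 2 "snd (tri p q r)"] in_F_tri[of p q r n k] tri_split[of p q r] by simp

lemma NK_ns_quad: "u \<in> NK C n k \<Longrightarrow> p \<le> q \<Longrightarrow> q \<le> r \<Longrightarrow> r \<le> s \<Longrightarrow> inF2 n k p s \<Longrightarrow>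
  nerve_simplex C 3 (simp_act (dat u) 3 (snd (quad p q r s)))"
  using NK_ns[of u C n k 3 "snd (quad p q r s)"] in_F_quad[of p q r s n k] quad_split[of p q r s] by simp

lemma nerve_loc: assumes u: "u \<in> NK C n k" and kn: "k \<le> n"
  shows "loc C n k (dat u)"
  unfolding loc_def
proof (intro conjI; intro allI impI)
  fix p assume "p \<le> n"
  then have "inF2 n k p p" using kn by (auto simp: inF2_def)
  note f = ns_act_facts[OF NK_ns_tri[OF u order.refl order.refl this]]
  show "sob (dat u) p \<in> Ob C" using f(1)[of 0] by (simp add: tri_def)
next
  fix p q assume h: "inF2 n k p q"
  then have "p \<le> q" by (simp add: inF2_def)
  note f = ns_act_facts[OF NK_ns_tri[OF u this order.refl h]]
  show "sar (dat u) q p \<in> Ar C \<and> dom1 C (sar (dat u) q p) = sob (dat u) p \<and> cod1 C (sar (dat u) q p) = sob (dat u) q"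
    using f(2)[of 0 1] by (simp add: tri_def)
next
  fix p assume "p \<le> n"
  then have "inF2 n k p p" using kn by (auto simp: inF2_def)
  note f = ns_act_facts[OF NK_ns_tri[OF u order.refl order.refl this]]
  show "sar (dat u) p p = id1 C (sob (dat u) p)" using f(3)[of 0] by (simp add: tri_def)
next
  fix p q r assume h: "p \<le> q \<and> q \<le> r \<and> inF2 n k p r"
  note f = ns_act_facts[OF NK_ns_tri[of u C n k p q r]]
  show "sce (dat u) r q p \<in> Ce C \<and> src C (sce (dat u) r q p) = sar (dat u) r p \<and>
       tgt C (sce (dat u) r q p) = comp C (sar (dat u) r q) (sar (dat u) q p)"
    using f(4)[of 0 1 2] h u by (simp add: tri_def)
next
  fix p q r assume h: "p \<le> q \<and> q \<le> r \<and> inF2 n k p r \<and> (p = q \<or> q = r)"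
  note f = ns_act_facts[OF NK_ns_tri[of u C n k p q r]]
  show "sce (dat u) r q p = id2 C (sar (dat u) r p)"
  proof (cases "p = q")
    case True then show ?thesis using f(5)[of 0 0 2] h u by (simp add: tri_def)
  next
    case False then show ?thesis using f(5)[of 0 2 2] h u by (simp add: tri_def)
  qed
next
  fix p q r s assume h: "p < q \<and> q < r \<and> r < s \<and> inF2 n k p s"
  note f = ns_act_facts[OF NK_ns_quad[of u C n k p q r s]]
  show "cocy C (dat u) p q r s" using f(6)[of 0 1 2 3] h u by (simp add: quad_def)
qed


locale ctx = tc C for C :: "('o, 'a, 'c, 'z) twocat_scheme" +
  fixes n k p :: nat and G :: "('o, 'a, 'c) simp" and \<alpha> :: 'c
  assumes L: "loc C n k G" and kp: "k = Suc p" and kn: "k < n"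
    and \<alpha>ce: "\<alpha> \<in> Ce C" and \<alpha>tg: "tgt C \<alpha> = comp C (sar G n k) (sar G k p)"
begin

abbreviation "VV \<equiv> sob G"
abbreviation "AA \<equiv> sar G"
abbreviation "ZZ \<equiv> sce G"

lemma A_ar[simp]: "inF2 n k x y \<Longrightarrow> AA y x \<in> Ar C"
  and A_dom[simp]: "inF2 n k x y \<Longrightarrow> d1 (AA y x) = VV x"
  and A_cod[simp]: "inF2 n k x y \<Longrightarrow> c1 (AA y x) = VV y"
  using loc_A[OF L] by blast+

lemma Z_ce[simp]: "x \<le> y \<Longrightarrow> y \<le> z \<Longrightarrow> inF2 n k x z \<Longrightarrow> ZZ z y x \<in> Ce C"
  and Z_src[simp]: "x \<le> y \<Longrightarrow> y \<le> z \<Longrightarrow> inF2 n k x z \<Longrightarrow> sr (ZZ z y x) = AA z x"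
  and Z_tgt[simp]: "x \<le> y \<Longrightarrow> y \<le> z \<Longrightarrow> inF2 n k x z \<Longrightarrow> tg (ZZ z y x) = cp (AA z y) (AA y x)"
  using loc_Z[OF L] by blast+

lemma Zcocy: "x \<le> y \<Longrightarrow> y \<le> z \<Longrightarrow> z \<le> w \<Longrightarrow> inF2 n k x w \<Longrightarrow>
  vc (hc (i2 (AA w z)) (ZZ z y x)) (ZZ w z x) = vc (hc (ZZ w z y) (i2 (AA y x))) (ZZ w y x)"
  using loc_cocy_all[OF L] unfolding cocy_def by blast

definition beta :: "nat \<Rightarrow> 'c" where
  "beta q = vc (inv2c (hc (i2 (AA n q)) (ZZ q k p))) (vc (hc (ZZ n q k) (i2 (AA k p))) \<alpha>)"

definition Zn :: "nat \<Rightarrow> 'c" where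
  "Zn q = (if q = k then \<alpha> else beta q)"

lemma pk: "p < k" using kp by simp

lemma F2[simp]: "inF2 n k x y \<longleftrightarrow> x \<le> y \<and> y \<le> n \<and> (y < n \<or> k \<le> x)"
  by (simp add: inF2_def)

lemma \<alpha>src: "sr \<alpha> \<in> Ar C" "d1 (sr \<alpha>) = VV p" "c1 (sr \<alpha>) = VV n"
proof -
  show "sr \<alpha> \<in> Ar C" using \<alpha>ce by simp
  have "d1 (tg \<alpha>) = VV p" "c1 (tg \<alpha>) = VV n" using pk kn \<alpha>tg by auto
  then show "d1 (sr \<alpha>) = VV p" "c1 (sr \<alpha>) = VV n" using \<alpha>ce by simp_all
qed

lemma beta_facts: assumes q: "k \<le> q" "q < n"
  shows "beta q \<in> Ce C" "sr (beta q) = sr \<alpha>" "tg (beta q) = cp (AA n q) (AA q p)"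
    "vc (hc (i2 (AA n q)) (ZZ q k p)) (beta q) = vc (hc (ZZ n q k) (i2 (AA k p))) \<alpha>"
proof -
  let ?g = "hc (i2 (AA n q)) (ZZ q k p)"
  let ?X = "vc (hc (ZZ n q k) (i2 (AA k p))) \<alpha>"
  have g: "?g \<in> Ce C" "sr ?g = cp (AA n q) (AA q p)" "tg ?g = cp (AA n q) (cp (AA q k) (AA k p))"
    using q pk kn by auto
  have X: "?X \<in> Ce C" "sr ?X = sr \<alpha>" "tg ?X = cp (cp (AA n q) (AA q k)) (AA k p)"
    using q pk kn \<alpha>ce \<alpha>tg by auto
  have as: "cp (AA n q) (cp (AA q k) (AA k p)) = cp (cp (AA n q) (AA q k)) (AA k p)"
    using q pk kn by (intro comp_assoc) auto
  show "beta q \<in> Ce C" "sr (beta q) = sr \<alpha>" "tg (beta q) = cp (AA n q) (AA q p)"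
    unfolding beta_def using g X as by auto
  show "vc ?g (beta q) = ?X" unfolding beta_def using g X as by (intro inv_cancel) auto
qed

lemma Zn_all: assumes q: "k \<le> q" "q < n"
  shows "Zn q \<in> Ce C \<and> sr (Zn q) = sr \<alpha> \<and> tg (Zn q) = cp (AA n q) (AA q p) \<and>
    vc (hc (i2 (AA n q)) (ZZ q k p)) (Zn q) = vc (hc (ZZ n q k) (i2 (AA k p))) \<alpha>"
proof (cases "q = k")
  case True
  have z1: "ZZ k k p = i2 (AA k p)" using loc_Zn[OF L, of p k k] pk kn by simp
  have z2: "ZZ n k k = i2 (AA n k)" using loc_Zn[OF L, of k k n] pk kn by simp
  show ?thesis
    unfolding Zn_def using True z1 z2 \<alpha>ce \<alpha>tg pk kn by auto
next
  case False
  then show ?thesis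
    unfolding Zn_def using beta_facts[OF q] by auto
qed

lemma Zn_facts: assumes q: "k \<le> q" "q < n"
  shows "Zn q \<in> Ce C" "sr (Zn q) = sr \<alpha>" "tg (Zn q) = cp (AA n q) (AA q p)"
    "vc (hc (i2 (AA n q)) (ZZ q k p)) (Zn q) = vc (hc (ZZ n q k) (i2 (AA k p))) \<alpha>"
  using Zn_all[OF q] by blast+

lemma main_cocy: assumes q: "k \<le> q" "q < r" "r < n"
  shows "vc (hc (i2 (AA n r)) (ZZ r q p)) (Zn r) = vc (hc (ZZ n r q) (i2 (AA q p))) (Zn q)"
proof -
  have qn: "q < n" using q by simp
  have kr: "k \<le> r" using q by simp
  note zr = Zn_facts(1-3)[OF kr q(3)] and zq = Zn_facts(1-3)[OF q(1) qn]
  note Dr = Zn_facts(4)[OF kr q(3)] and Dq = Zn_facts(4)[OF q(1) qn]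
  note pk' = pk
  let ?z = "ZZ q k p"
  let ?g = "hc (i2 (AA n r)) (hc (i2 (AA r q)) ?z)"
  let ?X = "hc (i2 (AA n r)) (ZZ r q p)"
  let ?Y = "hc (ZZ n r q) (i2 (AA q p))"
  let ?M = "vc (hc (vc (hc (ZZ n r q) (i2 (AA q k))) (ZZ n q k)) (i2 (AA k p))) \<alpha>"
  have O1: "vc (hc (i2 (AA r q)) ?z) (ZZ r q p) = vc (hc (ZZ r q k) (i2 (AA k p))) (ZZ r k p)"
    using Zcocy[of p k q r] q pk by simp
  have O2: "vc (hc (i2 (AA n r)) (ZZ r q k)) (ZZ n r k) = vc (hc (ZZ n r q) (i2 (AA q k))) (ZZ n q k)"
    using Zcocy[of k q r n] q by simp
  have g: "?g \<in> Ce C" "sr ?g = cp (AA n r) (cp (AA r q) (AA q p))"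
    using q pk by auto
  have X: "?X \<in> Ce C" "tg ?X = cp (AA n r) (cp (AA r q) (AA q p))" "sr ?X = cp (AA n r) (AA r p)"
    using q pk by auto
  have Y: "?Y \<in> Ce C" "tg ?Y = cp (cp (AA n r) (AA r q)) (AA q p)" "sr ?Y = cp (AA n q) (AA q p)"
    using q pk by auto
  have as1: "cp (AA n r) (cp (AA r q) (AA q p)) = cp (cp (AA n r) (AA r q)) (AA q p)"
    using q pk by (intro comp_assoc) auto
  have as2: "cp (AA r q) (cp (AA q k) (AA k p)) = cp (cp (AA r q) (AA q k)) (AA k p)"
    using q pk by (intro comp_assoc) auto
  have as3: "cp (AA n r) (cp (AA r k) (AA k p)) = cp (cp (AA n r) (AA r k)) (AA k p)"
    using q pk by (intro comp_assoc) auto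
  have as4: "cp (AA n r) (cp (AA r q) (AA q k)) = cp (cp (AA n r) (AA r q)) (AA q k)"
    using q pk by (intro comp_assoc) auto
  have as5: "cp (AA n q) (cp (AA q k) (AA k p)) = cp (cp (AA n q) (AA q k)) (AA k p)"
    using q pk by (intro comp_assoc) auto
  have L1: "vc ?g (vc ?X (Zn r)) = vc (vc ?g ?X) (Zn r)"
    using g X zr as1 by (intro vc_assoc) auto
  have L2: "vc ?g ?X = hc (i2 (AA n r)) (vc (hc (i2 (AA r q)) ?z) (ZZ r q p))"
    using L_vc[of "ZZ r q p" "hc (i2 (AA r q)) ?z" "AA n r"] q pk as2 by auto
  have L3: "hc (i2 (AA n r)) (vc (hc (ZZ r q k) (i2 (AA k p))) (ZZ r k p)) =
     vc (hc (i2 (AA n r)) (hc (ZZ r q k) (i2 (AA k p)))) (hc (i2 (AA n r)) (ZZ r k p))"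
    using L_vc[of "ZZ r k p" "hc (ZZ r q k) (i2 (AA k p))" "AA n r"] q pk by auto
  let ?W1 = "hc (i2 (AA n r)) (hc (ZZ r q k) (i2 (AA k p)))"
  let ?W2 = "hc (i2 (AA n r)) (ZZ r k p)"
  have L4: "vc (vc ?W1 ?W2) (Zn r) = vc ?W1 (vc ?W2 (Zn r))"
    using q pk zr as3 by (intro vc_assoc[symmetric]) auto
  have L5: "vc ?W1 (vc (hc (ZZ n r k) (i2 (AA k p))) \<alpha>) = vc (vc ?W1 (hc (ZZ n r k) (i2 (AA k p)))) \<alpha>"
    using q pk \<alpha>ce \<alpha>tg as3 by (intro vc_assoc) auto
  have L6: "?W1 = hc (hc (i2 (AA n r)) (ZZ r q k)) (i2 (AA k p))"
    using L_R[of "ZZ r q k" "AA k p" "AA n r"] q pk by auto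
  have L7: "vc (hc (hc (i2 (AA n r)) (ZZ r q k)) (i2 (AA k p))) (hc (ZZ n r k) (i2 (AA k p))) =
     hc (vc (hc (i2 (AA n r)) (ZZ r q k)) (ZZ n r k)) (i2 (AA k p))"
    using R_vc[of "ZZ n r k" "hc (i2 (AA n r)) (ZZ r q k)" "AA k p"] q pk by auto
  have LHS: "vc ?g (vc ?X (Zn r)) = ?M"
  proof -
    have "vc ?g (vc ?X (Zn r)) = vc (hc (i2 (AA n r)) (vc (hc (ZZ r q k) (i2 (AA k p))) (ZZ r k p))) (Zn r)"
      using L1 L2 O1 by (simp only:)
    also have "\<dots> = vc (vc ?W1 ?W2) (Zn r)" using L3 by (simp only:)
    also have "\<dots> = vc ?W1 (vc (hc (ZZ n r k) (i2 (AA k p))) \<alpha>)" using L4 Dr by (simp only:)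
    also have "\<dots> = ?M" using L5 L6 L7 O2 by (simp only:)
    finally show ?thesis .
  qed
  have R1: "vc ?g (vc ?Y (Zn q)) = vc (vc ?g ?Y) (Zn q)"
    using g Y zq as1 by (intro vc_assoc) auto
  have R2: "?g = hc (i2 (cp (AA n r) (AA r q))) ?z"
    using L_L[of ?z "AA r q" "AA n r"] q pk by auto
  have R3: "vc (hc (i2 (cp (AA n r) (AA r q))) ?z) ?Y =
      vc (hc (ZZ n r q) (i2 (cp (AA q k) (AA k p)))) (hc (i2 (AA n q)) ?z)"
    using exch[of ?z "ZZ n r q"] q pk by auto
  let ?P = "hc (ZZ n r q) (i2 (cp (AA q k) (AA k p)))"
  have R4: "vc (vc ?P (hc (i2 (AA n q)) ?z)) (Zn q) = vc ?P (vc (hc (i2 (AA n q)) ?z) (Zn q))"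
    using q pk zq by (intro vc_assoc[symmetric]) auto
  have R5: "vc ?P (vc (hc (ZZ n q k) (i2 (AA k p))) \<alpha>) = vc (vc ?P (hc (ZZ n q k) (i2 (AA k p)))) \<alpha>"
    using q pk \<alpha>ce \<alpha>tg as5 by (intro vc_assoc) auto
  have R6: "?P = hc (hc (ZZ n r q) (i2 (AA q k))) (i2 (AA k p))"
    using R_R[of "ZZ n r q" "AA q k" "AA k p"] q pk by auto
  have R7: "vc (hc (hc (ZZ n r q) (i2 (AA q k))) (i2 (AA k p))) (hc (ZZ n q k) (i2 (AA k p))) =
     hc (vc (hc (ZZ n r q) (i2 (AA q k))) (ZZ n q k)) (i2 (AA k p))"
    using R_vc[of "ZZ n q k" "hc (ZZ n r q) (i2 (AA q k))" "AA k p"] q pk by auto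
  have RHS: "vc ?g (vc ?Y (Zn q)) = ?M"
  proof -
    have "vc ?g (vc ?Y (Zn q)) = vc (vc (hc (i2 (cp (AA n r) (AA r q))) ?z) ?Y) (Zn q)"
      using R1 R2 by (simp only:)
    also have "\<dots> = vc ?P (vc (hc (i2 (AA n q)) ?z) (Zn q))" using R3 R4 by (simp only:)
    also have "\<dots> = vc ?P (vc (hc (ZZ n q k) (i2 (AA k p))) \<alpha>)" using Dq by (simp only:)
    also have "\<dots> = ?M" using R5 R6 R7 by (simp only:)
    finally show ?thesis .
  qed
  have x: "vc ?X (Zn r) \<in> Ce C" "tg (vc ?X (Zn r)) = sr ?g" using X zr g by simp_all
  have y: "vc ?Y (Zn q) \<in> Ce C" "tg (vc ?Y (Zn q)) = sr ?g" using Y zq g as1 by simp_all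
  show ?thesis
    by (rule cancel_vc[OF g(1) x(1) y(1) x(2) y(2)]) (simp only: LHS RHS)
qed

end


definition agree :: "nat \<Rightarrow> nat \<Rightarrow> ('o, 'a, 'c) simp \<Rightarrow> ('o, 'a, 'c) simp \<Rightarrow> bool" where
  "agree n k G G' \<longleftrightarrow> (\<forall>x. x \<le> n \<longrightarrow> sob G x = sob G' x) \<and>
     (\<forall>x y. inF2 n k x y \<longrightarrow> sar G y x = sar G' y x) \<and>
     (\<forall>x y z. x \<le> y \<and> y \<le> z \<and> inF2 n k x z \<longrightarrow> sce G z y x = sce G' z y x)"

lemma ext_agree: assumes ag: "agree n k G G'" shows "ext n k G = ext n k G'"
proof
  fix s show "ext n k G s = ext n k G' s"
  proof (cases "in_F n k s")
    case False then show ?thesis by (simp add: ext_def)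
  next
    case True
    obtain m a where s: "s = (m, a)" by (cases s)
    have F: "in_F n k (m, a)" using True s by simp
    note a1 = ag[unfolded agree_def, THEN conjunct1, rule_format]
    note a2 = ag[unfolded agree_def, THEN conjunct2, THEN conjunct1, rule_format]
    note a3 = ag[unfolded agree_def, THEN conjunct2, THEN conjunct2, rule_format]
    have "simp_act G m a = simp_act G' m a"
    proof (rule simp_eqI)
      show "sob (simp_act G m a) = sob (simp_act G' m a)"
        using a1 inF_bound[OF F] by (auto simp: sob_act fun_eq_iff)
      show "sar (simp_act G m a) = sar (simp_act G' m a)"
        using a2 inF_F2[OF F] by (auto simp: sar_act fun_eq_iff)
      show "sce (simp_act G m a) = sce (simp_act G' m a)"
        using a3 inF_F2[OF F] inF_mono[OF F] by (auto simp: sce_act fun_eq_iff)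
    qed
    then show ?thesis using True s by (simp add: ext_def)
  qed
qed

lemma inF2_mono: "k' \<le> k \<Longrightarrow> inF2 n k x y \<Longrightarrow> inF2 n k' x y"
  by (auto simp: inF2_def)

lemma in_F_mono: "k' \<le> k \<Longrightarrow> in_F n k s \<Longrightarrow> in_F n k' s"
  by (auto simp: in_F_def)

lemma ext_restr: "k' \<le> k \<Longrightarrow> restr n k (ext n k' G) = ext n k G"
  by (auto simp: restr_def ext_def fun_eq_iff dest: in_F_mono)

lemma agree_mono: "k' \<le> k \<Longrightarrow> agree n k' G G' \<Longrightarrow> agree n k G G'"
  unfolding agree_def by (meson inF2_mono)

lemma ext_vals: assumes F: "in_F n k (tri x y z)"
  shows "sce (ext n k G (tri x y z)) 2 1 0 = sce G z y x"
    "sar (ext n k G (tri x y z)) 2 0 = sar G z x"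
    "sob (ext n k G (tri x y z)) 0 = sob G x"
  using F by (auto simp: ext_def sce_act sar_act sob_act tri_def)

lemma ext_edge: assumes "inF2 n k x y"
  shows "u_ar (ext n k G) y x = sar G y x"
  using in_F_edge[OF assms] by (auto simp: u_ar_def ext_def sar_act edge_def)

lemma ext_eq_agree: assumes e: "ext n k G = ext n k G'" and kn: "k \<le> n"
  shows "agree n k G G'"
  unfolding agree_def
proof (intro conjI allI impI)
  fix x assume "x \<le> n"
  then have "in_F n k (tri x x x)" using kn by (intro in_F_tri) (auto simp: inF2_def)
  then show "sob G x = sob G' x" using ext_vals(3)[of n k x x x] e by metis
next
  fix x y assume h: "inF2 n k x y"
  then have "in_F n k (tri x y y)" by (intro in_F_tri) (auto simp: inF2_def)
  then show "sar G y x = sar G' y x" using ext_vals(2)[of n k x y y] e by metis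
next
  fix x y z assume h: "x \<le> y \<and> y \<le> z \<and> inF2 n k x z"
  then have "in_F n k (tri x y z)" by (intro in_F_tri) auto
  then show "sce G z y x = sce G' z y x" using ext_vals(1)[of n k x y z] e by metis
qed

context tc
begin

lemma loc_mono: assumes kk: "k' \<le> k" and L: "loc C n k' G" shows "loc C n k G"
  unfolding loc_def
proof (intro conjI; intro allI impI)
  fix x assume "x \<le> n" then show "sob G x \<in> Ob C" using loc_O[OF L] by blast
next
  fix x y assume "inF2 n k x y" then show "sar G y x \<in> Ar C \<and> d1 (sar G y x) = sob G x \<and> c1 (sar G y x) = sob G y"
    using loc_A[OF L] inF2_mono[OF kk] by blast
next
  fix x assume "x \<le> n" then show "sar G x x = i1 (sob G x)" using loc_Aid[OF L] by blast
next
  fix x y z assume "x \<le> y \<and> y \<le> z \<and> inF2 n k x z"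
  then show "sce G z y x \<in> Ce C \<and> sr (sce G z y x) = sar G z x \<and> tg (sce G z y x) = cp (sar G z y) (sar G y x)"
    using loc_Z[OF L] inF2_mono[OF kk] by blast
next
  fix x y z assume "x \<le> y \<and> y \<le> z \<and> inF2 n k x z \<and> (x = y \<or> y = z)"
  then show "sce G z y x = i2 (sar G z x)"
    using loc_Zn[OF L] inF2_mono[OF kk] by blast
next
  fix x y z w assume "x < y \<and> y < z \<and> z < w \<and> inF2 n k x w"
  then show "cocy C G x y z w"
    using loc_cocy[OF L] inF2_mono[OF kk] by blast
qed

end


context ctx
begin

definition AN :: "nat \<Rightarrow> nat \<Rightarrow> 'a" where
  "AN y x = (if x = p \<and> y = n then sr \<alpha> else AA y x)"

definition ZN :: "nat \<Rightarrow> nat \<Rightarrow> nat \<Rightarrow> 'c" where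
  "ZN z y x = (if x = p \<and> z = n then (if y = p \<or> y = n then i2 (sr \<alpha>) else Zn y) else ZZ z y x)"

definition GN :: "('o, 'a, 'c) simp" where
  "GN = (VV, AN, ZN)"

lemma GN_sel[simp]: "sob GN = VV" "sar GN = AN" "sce GN = ZN"
  by (simp_all add: GN_def sob_def sar_def sce_def)

lemma old: "inF2 n p x y \<Longrightarrow> \<not> (x = p \<and> y = n) \<Longrightarrow> inF2 n k x y"
  using pk kp by (auto simp: inF2_def)

lemma pn: "p < n" using pk kn by simp

lemma GN_loc: "loc C n p GN"
  unfolding loc_def GN_sel
proof (intro conjI; intro allI impI)
  fix x assume "x \<le> n" then show "VV x \<in> Ob C" using loc_O[OF L] by blast
next
  fix x y assume h: "inF2 n p x y"
  show "AN y x \<in> Ar C \<and> d1 (AN y x) = VV x \<and> c1 (AN y x) = VV y"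
  proof (cases "x = p \<and> y = n")
    case True then show ?thesis using \<alpha>src by (simp add: AN_def)
  next
    case False then show ?thesis using old[OF h False] by (auto simp: AN_def)
  qed
next
  fix x assume "x \<le> n" then show "AN x x = i1 (VV x)" using loc_Aid[OF L] pn by (auto simp: AN_def)
next
  fix x y z assume h: "x \<le> y \<and> y \<le> z \<and> inF2 n p x z"
  show "ZN z y x \<in> Ce C \<and> sr (ZN z y x) = AN z x \<and> tg (ZN z y x) = cp (AN z y) (AN y x)"
  proof (cases "x = p \<and> z = n")
    case True
    have App: "AA p p = i1 (VV p)" using loc_Aid[OF L] pn by simp
    have Ann: "AA n n = i1 (VV n)" using loc_Aid[OF L] by simp
    consider "y = p" | "y = n" | "k \<le> y \<and> y < n" using h True pk kp by linarith
    then show ?thesis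
    proof cases
      case 1 then show ?thesis using True App \<alpha>src pn by (simp add: ZN_def AN_def)
    next
      case 2 then show ?thesis using True Ann \<alpha>src pn by (simp add: ZN_def AN_def)
    next
      case 3 then show ?thesis using True Zn_facts(1-3)[of y] pk by (simp add: ZN_def AN_def)
    qed
  next
    case False
    have o: "inF2 n k x z" using old[of x z] h False by blast
    have "\<not> (x = p \<and> y = n)" "\<not> (y = p \<and> z = n)" using h False pk o by (auto simp: inF2_def)
    then show ?thesis using False o h by (auto simp: ZN_def AN_def)
  qed
next
  fix x y z assume h: "x \<le> y \<and> y \<le> z \<and> inF2 n p x z \<and> (x = y \<or> y = z)"
  show "ZN z y x = i2 (AN z x)"
  proof (cases "x = p \<and> z = n")
    case True then show ?thesis using h by (auto simp: ZN_def AN_def)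
  next
    case False
    have o: "inF2 n k x z" using old[of x z] h False by blast
    then show ?thesis using False h loc_Zn[OF L, of x y z] by (auto simp: ZN_def AN_def)
  qed
next
  fix x y z w assume h: "x < y \<and> y < z \<and> z < w \<and> inF2 n p x w"
  show "cocy C GN x y z w"
  proof (cases "x = p \<and> w = n")
    case True
    have ky: "k \<le> y" using h True kp by simp
    have e: "AN n z = AA n z" "ZN z y p = ZZ z y p" "ZN n z p = Zn z" "ZN n z y = ZZ n z y"
       "AN y p = AA y p" "ZN n y p = Zn y"
      using h True pk by (auto simp: AN_def ZN_def)
    show ?thesis unfolding cocy_def GN_sel using True e main_cocy[OF ky, of z] h by simp
  next
    case False
    have o: "inF2 n k x w" using old[of x w] h False by auto
    have c: "cocy C G x y z w" using loc_cocy[OF L, of x y z w] h o by blast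
    have ne: "\<not> (y = p \<and> w = n)" "\<not> (z = p \<and> w = n)" "\<not> (x = p \<and> z = n)" "\<not> (x = p \<and> y = n)"
      "\<not> (y = p \<and> z = n)"
      using o h pk by (auto simp: inF2_def)
    have e: "AN w z = AA w z" "ZN z y x = ZZ z y x" "ZN w z x = ZZ w z x" "ZN w z y = ZZ w z y"
      "AN y x = AA y x" "ZN w y x = ZZ w y x"
      using ne False by (auto simp: AN_def ZN_def)
    show ?thesis using c unfolding cocy_def GN_sel e .
  qed
qed

lemma GN_agree: "agree n k G GN"
  unfolding agree_def GN_sel
proof (intro conjI allI impI)
  fix x y assume "inF2 n k x y" then show "AA y x = AN y x" using pk by (auto simp: AN_def inF2_def)
next
  fix x y z assume "x \<le> y \<and> y \<le> z \<and> inF2 n k x z" then show "ZZ z y x = ZN z y x"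
    using pk by (auto simp: ZN_def inF2_def)
qed simp

lemma GN_alpha: "sce GN n k p = \<alpha>"
  using pk kn by (simp add: ZN_def Zn_def)

end


lemma ext_uce: "in_F n k (tri x y z) \<Longrightarrow> u_ce (ext n k G) z y x = sce G z y x"
  unfolding u_ce_def by (rule ext_vals(1))

context tc
begin

lemma agree_extend:
  assumes LG: "loc C n p G" and LG': "loc C n p G'" and ag: "agree n k G G'"
    and kp: "k = Suc p" and kn: "k < n" and eq: "sce G n k p = sce G' n k p"
  shows "agree n p G G'"
proof -
  note a1 = ag[unfolded agree_def, THEN conjunct1, rule_format]
  note a2 = ag[unfolded agree_def, THEN conjunct2, THEN conjunct1, rule_format]
  note a3 = ag[unfolded agree_def, THEN conjunct2, THEN conjunct2, rule_format]
  have old: "inF2 n k x y" if "inF2 n p x y" "\<not> (x = p \<and> y = n)" for x y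
    using that kp by (auto simp: inF2_def)
  have Fpn: "inF2 n p p n" using kn kp by (simp add: inF2_def)
  have Anp: "sar G n p = sar G' n p"
    using loc_Z[OF LG, of p k n] loc_Z[OF LG', of p k n] eq Fpn kp kn by auto
  show ?thesis unfolding agree_def
  proof (intro conjI allI impI)
    fix x assume "x \<le> n" then show "sob G x = sob G' x" using a1 by blast
  next
    fix x y assume h: "inF2 n p x y"
    show "sar G y x = sar G' y x"
    proof (cases "x = p \<and> y = n")
      case True then show ?thesis using Anp by simp
    next
      case False then show ?thesis using a2 old[OF h False] by blast
    qed
  next
    fix x y z assume h: "x \<le> y \<and> y \<le> z \<and> inF2 n p x z"
    show "sce G z y x = sce G' z y x"
    proof (cases "x = p \<and> z = n")
      case False then show ?thesis using a3 old[of x z] h False by blast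
    next
      case True
      consider "y = p \<or> y = n" | "y = k" | "k < y \<and> y < n" using h True kp by linarith
      then show ?thesis
      proof cases
        case 1
        then show ?thesis using loc_Zn[OF LG, of p y n] loc_Zn[OF LG', of p y n] True h Anp by auto
      next
        case 2 then show ?thesis using True eq by simp
      next
        case 3
        have Fk: "inF2 n k y n" "inF2 n k p k" "inF2 n k k n" "inF2 n k p y" using 3 kp kn by (auto simp: inF2_def)
        have e: "sar G n y = sar G' n y" "sce G y k p = sce G' y k p" "sce G n y k = sce G' n y k"
          "sar G k p = sar G' k p"
          using a2 a3 Fk 3 kp by auto
        have c: "cocy C G p k y n" "cocy C G' p k y n"
          using loc_cocy_all[OF LG, of p k y n] loc_cocy_all[OF LG', of p k y n] 3 kp Fpn by auto
        let ?g = "hc (i2 (sar G n y)) (sce G y k p)"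
        have Fs: "inF2 n p y n" "inF2 n p p y" "inF2 n p k y" using 3 kp by (auto simp: inF2_def)
        have g: "?g \<in> Ce C" "sr ?g = cp (sar G n y) (sar G y p)"
          using loc_A[OF LG, OF Fs(1)] loc_A[OF LG, OF Fs(2)] loc_Z[OF LG, of p k y] Fs 3 kp by auto
        have x: "sce G n y p \<in> Ce C" "tg (sce G n y p) = sr ?g"
          using loc_Z[OF LG, of p y n] g 3 kp Fpn by auto
        have y: "sce G' n y p \<in> Ce C" "tg (sce G' n y p) = sr ?g"
          using loc_Z[OF LG', of p y n] g 3 kp Fpn a2[OF Fk(1)] a2[OF old[OF Fs(2)]] by auto
        have "vc ?g (sce G n y p) = vc ?g (sce G' n y p)"
          using c e eq unfolding cocy_def by simp
        then show ?thesis using True cancel_vc[OF g(1) x(1) y(1) x(2) y(2)] by simp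
      qed
    qed
  qed
qed

end

theorem mainTheorem6:
  fixes C :: "('o, 'a, 'c, 'z) twocat_scheme" and n k :: nat
  assumes "two_category C"
    and "all_2cells_invertible C"
    and "2 \<le> n" and "1 \<le> k" and "k \<le> n - 1"
  shows "bij_betw (\<lambda>u. (restr n k u, u_ce u n k (k - 1)))
           (NK C n (k - 1))
           {(v, \<alpha>). v \<in> NK C n k \<and> \<alpha> \<in> Ce C \<and> phi C n k v = tgt C \<alpha>}"
proof -
  interpret tc C using assms(1,2) by unfold_locales
  define p where "p = k - 1"
  have kp: "k = Suc p" and kn: "k < n" using assms(3-5) p_def by auto
  have pk: "p \<le> k" using kp by simp
  have Ftri: "in_F n p (tri p k n)" using kp kn by (intro in_F_tri) (auto simp: inF2_def)
  have E1: "inF2 n k k n" "inF2 n k p k" using kp kn by (auto simp: inF2_def)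
  have img: "restr n k u \<in> NK C n k \<and> u_ce u n k p \<in> Ce C \<and> phi C n k (restr n k u) = tgt C (u_ce u n k p)
     \<and> restr n k u = ext n k (dat u) \<and> u_ce u n k p = sce (dat u) n k p"
    if u: "u \<in> NK C n p" for u
  proof -
    let ?G = "dat u"
    have LG: "loc C n p ?G" using nerve_loc[OF u] kn kp by simp
    have ue: "u = ext n p ?G" using NK_ext[OF u] .
    have r: "restr n k u = ext n k ?G" using ue ext_restr[OF pk] by metis
    have LGk: "loc C n k ?G" using loc_mono[OF pk LG] .
    have rN: "ext n k ?G \<in> NK C n k" by (rule ext_NK) (rule loc_nerve[OF LGk])
    have ce: "u_ce u n k p = sce ?G n k p" using ue ext_uce[OF Ftri] by metis
    have z: "sce ?G n k p \<in> Ce C" "tgt C (sce ?G n k p) = comp C (sar ?G n k) (sar ?G k p)"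
      using loc_Z[OF LG, of p k n] kp kn by (auto simp: inF2_def)
    have ph: "phi C n k (ext n k ?G) = comp C (sar ?G n k) (sar ?G k p)"
      unfolding phi_def using ext_edge[OF E1(1), of ?G] ext_edge[OF E1(2), of ?G] kp by simp
    show ?thesis using r rN ce z ph by simp
  qed
  show ?thesis
    unfolding p_def[symmetric] bij_betw_def
  proof (intro conjI)
    show "inj_on (\<lambda>u. (restr n k u, u_ce u n k p)) (NK C n p)"
    proof (rule inj_onI)
      fix u u' assume u: "u \<in> NK C n p" and u': "u' \<in> NK C n p"
        and e: "(restr n k u, u_ce u n k p) = (restr n k u', u_ce u' n k p)"
      have LG: "loc C n p (dat u)" using nerve_loc[OF u] kn kp by simp
      have LG': "loc C n p (dat u')" using nerve_loc[OF u'] kn kp by simp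
      have "ext n k (dat u) = ext n k (dat u')" using e img[OF u] img[OF u'] by simp
      then have ag: "agree n k (dat u) (dat u')" using kn by (intro ext_eq_agree) auto
      have eq: "sce (dat u) n k p = sce (dat u') n k p" using e img[OF u] img[OF u'] by simp
      have "agree n p (dat u) (dat u')" using agree_extend[OF LG LG' ag kp kn eq] .
      then show "u = u'" using NK_ext[OF u] NK_ext[OF u'] ext_agree by metis
    qed
  next
    show "(\<lambda>u. (restr n k u, u_ce u n k p)) ` NK C n p =
      {(v, \<alpha>). v \<in> NK C n k \<and> \<alpha> \<in> Ce C \<and> phi C n k v = tgt C \<alpha>}"
    proof (intro equalityI subsetI)
      fix x assume "x \<in> (\<lambda>u. (restr n k u, u_ce u n k p)) ` NK C n p"
      then obtain u where u: "u \<in> NK C n p" and x: "x = (restr n k u, u_ce u n k p)" by blast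
      show "x \<in> {(v, \<alpha>). v \<in> NK C n k \<and> \<alpha> \<in> Ce C \<and> phi C n k v = tgt C \<alpha>}"
      proof -
        have i: "restr n k u \<in> NK C n k" "u_ce u n k p \<in> Ce C" "phi C n k (restr n k u) = tgt C (u_ce u n k p)"
          using img[OF u] by blast+
        show ?thesis unfolding x using i by simp
      qed
    next
      fix x assume "x \<in> {(v, \<alpha>). v \<in> NK C n k \<and> \<alpha> \<in> Ce C \<and> phi C n k v = tgt C \<alpha>}"
      then obtain v \<alpha> where x: "x = (v, \<alpha>)" and v: "v \<in> NK C n k" and a: "\<alpha> \<in> Ce C"
        and ph: "phi C n k v = tgt C \<alpha>" by blast
      let ?G = "dat v"
      have LG: "loc C n k ?G" using nerve_loc[OF v] kn by simp
      have ve: "v = ext n k ?G" using NK_ext[OF v] .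
      have ph2: "phi C n k v = comp C (sar ?G n k) (sar ?G k p)"
        unfolding phi_def using ext_edge[OF E1(1), of ?G] ext_edge[OF E1(2), of ?G] ve kp by simp
      interpret X: ctx C n k p ?G \<alpha>
        using LG kp kn a ph ph2 by unfold_locales auto
      let ?u = "ext n p X.GN"
      have uN: "?u \<in> NK C n p" by (rule ext_NK) (rule loc_nerve[OF X.GN_loc])
      have "restr n k ?u = ext n k X.GN" using ext_restr[OF pk] .
      also have "\<dots> = ext n k ?G" using ext_agree[OF X.GN_agree] by simp
      finally have r: "restr n k ?u = v" using ve by simp
      have c: "u_ce ?u n k p = \<alpha>" using ext_uce[OF Ftri, of X.GN] X.GN_alpha by simp
      show "x \<in> (\<lambda>u. (restr n k u, u_ce u n k p)) ` NK C n p"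
        using uN r c x by (intro image_eqI[of _ _ ?u]) auto
    qed
  qed
qed

end
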